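(* Let $\mathfrak g_1,\mathfrak g_2$ be Lie superalgebras, $M_i$ a $\mathfrak g_i$-module ($i=1,2$), ${}^t\colon\mathfrak g_2\to\mathfrak g_1$ an even linear isomorphism and $\Psi\colon M_1\otimes M_2\to\mathbb C$ a non-degenerate even pairing. For $n\ge0$ define $\Psi_n\colon C^n(\mathfrak g_1,M_1)\otimes C_n(\mathfrak g_2,M_2)\to\mathbb C$ by $\Psi_n(f\otimes(\alpha\otimes x_1\cdots x_n))=(-1)^{\bar x_1+\cdots+\bar x_n}\Psi(f({}^tx_n\cdots{}^tx_1)\otimes\alpha)$. Then $\Psi_{n+1}(d_nf\otimes P)=\Psi_n(f\otimes\partial_{n+1}P)$ holds for all $n$, $f$, $P$ if and only if (P1) ${}^t$ is an anti-isomorphism of Lie superalgebras and (P2) $\Psi(m_1\otimes x.m_2)=\Psi({}^tx.m_1\otimes m_2)$ for all $x\in\mathfrak g_2$, $m_i\in M_i$.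
   Context: For a Lie superalgebra $\mathfrak g$ and module $M$: $C^n(\mathfrak g,M)=\mathrm{Hom}_{\mathbb C}(\mathrm{Sym}^n(\Pi\mathfrak g),M)$ with $d_nf(x_1\cdots x_{n+1})=\sum_i(-1)^{A_i}x_if(x_1\cdots\hat x_i\cdots x_{n+1})+\sum_{i<j}(-1)^{A_{i,j}}f([x_i,x_j]x_1\cdots\hat x_i\cdots\hat x_j\cdots x_{n+1})$, where $A_i=\bar x_i+(\bar f+k_{i-1})(\bar x_i+1)$, $A_{i,j}=\bar f+(k_{i-1}+1)(\bar x_i+1)+(k_{j-1}+\bar x_i+1)(\bar x_j+1)$, $k_i=\bar x_1+\cdots+\bar x_i+i$; and $C_n(\mathfrak g,M)=M\otimes\mathrm{Sym}^n(\Pi\mathfrak g)$ with $\partial_n(\alpha\otimes x_1\cdots x_n)=\sum_i(-1)^{B_i}(x_i\alpha)\otimes x_1\cdots\hat x_i\cdots x_n+\sum_{i<j}(-1)^{B_{i,j}}\alpha\otimes[x_i,x_j]x_1\cdots\hat x_i\cdots\hat x_j\cdots x_n$, where $B_i=(\bar\alpha+k_{i-1})(\bar x_i+1)$, $B_{i,j}=1+\bar\alpha+(k_{i-1}+1)(\bar x_i+1)+(k_{j-1}+\bar x_i+1)(\bar x_j+1)$. $\Pi$ is parity change and bars denote parities. *)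

theory Defs
  imports Complex_Main
begin

text \<open>Complex super vector spaces, represented by a scalar multiplication
  sc :: complex => 'v => 'v and a grading V :: nat => 'v set
  (V 0 = even part, V 1 = odd part).\<close>

definition super_space :: "(complex \<Rightarrow> 'v::ab_group_add \<Rightarrow> 'v) \<Rightarrow> (nat \<Rightarrow> 'v set) \<Rightarrow> bool" where
  "super_space sc V \<longleftrightarrow> vector_space sc \<and> module.subspace sc (V 0) \<and> module.subspace sc (V 1)
     \<and> (\<forall>v. \<exists>!ab. fst ab \<in> V 0 \<and> snd ab \<in> V 1 \<and> v = fst ab + snd ab)"

definition homog :: "(nat \<Rightarrow> 'v set) \<Rightarrow> 'v \<Rightarrow> bool" where
  "homog V x \<longleftrightarrow> x \<in> V 0 \<or> x \<in> V 1"

text \<open>Parity of a homogeneous element (the zero vector is given parity 0;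
  every expression below is multilinear, so this choice is immaterial).\<close>
definition par :: "(nat \<Rightarrow> 'v::zero set) \<Rightarrow> 'v \<Rightarrow> nat" where
  "par V x = (if x \<in> V 1 \<and> x \<noteq> 0 then 1 else 0)"

definition proj :: "(nat \<Rightarrow> 'v::ab_group_add set) \<Rightarrow> nat \<Rightarrow> 'v \<Rightarrow> 'v" where
  "proj V q m = (THE a. a \<in> V (q mod 2) \<and> m - a \<in> V (Suc q mod 2))"

abbreviation sgn :: "nat \<Rightarrow> complex" where
  "sgn A \<equiv> (-1) ^ A"

definition bilinear_map :: "(complex \<Rightarrow> 'a::ab_group_add \<Rightarrow> 'a) \<Rightarrow> (complex \<Rightarrow> 'b::ab_group_add \<Rightarrow> 'b) \<Rightarrow> (complex \<Rightarrow> 'c::ab_group_add \<Rightarrow> 'c)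
    \<Rightarrow> ('a \<Rightarrow> 'b \<Rightarrow> 'c) \<Rightarrow> bool" where
  "bilinear_map s1 s2 s3 b \<longleftrightarrow> (\<forall>x. Vector_Spaces.linear s2 s3 (b x)) \<and> (\<forall>y. Vector_Spaces.linear s1 s3 (\<lambda>x. b x y))"

definition lie_superalgebra :: "(complex \<Rightarrow> 'g::ab_group_add \<Rightarrow> 'g) \<Rightarrow> (nat \<Rightarrow> 'g set) \<Rightarrow> ('g \<Rightarrow> 'g \<Rightarrow> 'g) \<Rightarrow> bool" where
  "lie_superalgebra sc V br \<longleftrightarrow> super_space sc V \<and> bilinear_map sc sc sc br
    \<and> (\<forall>p q x y. p < 2 \<longrightarrow> q < 2 \<longrightarrow> x \<in> V p \<longrightarrow> y \<in> V q \<longrightarrow> br x y \<in> V ((p + q) mod 2))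
    \<and> (\<forall>x y. homog V x \<longrightarrow> homog V y \<longrightarrow> br x y = sc (- sgn (par V x * par V y)) (br y x))
    \<and> (\<forall>x y z. homog V x \<longrightarrow> homog V y \<longrightarrow> homog V z \<longrightarrow>
         br x (br y z) = br (br x y) z + sc (sgn (par V x * par V y)) (br y (br x z)))"

definition lie_supermodule :: "(complex \<Rightarrow> 'g::ab_group_add \<Rightarrow> 'g) \<Rightarrow> (nat \<Rightarrow> 'g set) \<Rightarrow> ('g \<Rightarrow> 'g \<Rightarrow> 'g)
    \<Rightarrow> (complex \<Rightarrow> 'm::ab_group_add \<Rightarrow> 'm) \<Rightarrow> (nat \<Rightarrow> 'm set) \<Rightarrow> ('g \<Rightarrow> 'm \<Rightarrow> 'm) \<Rightarrow> bool" where
  "lie_supermodule sc V br scm W act \<longleftrightarrow> super_space scm W \<and> bilinear_map sc scm scm act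
    \<and> (\<forall>p q x m. p < 2 \<longrightarrow> q < 2 \<longrightarrow> x \<in> V p \<longrightarrow> m \<in> W q \<longrightarrow> act x m \<in> W ((p + q) mod 2))
    \<and> (\<forall>x y m. homog V x \<longrightarrow> homog V y \<longrightarrow>
         act (br x y) m = act x (act y m) - scm (sgn (par V x * par V y)) (act y (act x m)))"

definition even_linear_iso :: "(complex \<Rightarrow> 'a::ab_group_add \<Rightarrow> 'a) \<Rightarrow> (nat \<Rightarrow> 'a set) \<Rightarrow> (complex \<Rightarrow> 'b::ab_group_add \<Rightarrow> 'b) \<Rightarrow> (nat \<Rightarrow> 'b set)
    \<Rightarrow> ('a \<Rightarrow> 'b) \<Rightarrow> bool" where
  "even_linear_iso s1 V1 s2 V2 f \<longleftrightarrow> Vector_Spaces.linear s1 s2 f \<and> bij f \<and> (\<forall>p<2. f ` V1 p \<subseteq> V2 p)"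

definition lie_anti_iso :: "(complex \<Rightarrow> 'a::ab_group_add \<Rightarrow> 'a) \<Rightarrow> ('a \<Rightarrow> 'a \<Rightarrow> 'a) \<Rightarrow> (complex \<Rightarrow> 'b::ab_group_add \<Rightarrow> 'b) \<Rightarrow> ('b \<Rightarrow> 'b \<Rightarrow> 'b)
    \<Rightarrow> ('a \<Rightarrow> 'b) \<Rightarrow> bool" where
  "lie_anti_iso s1 br1 s2 br2 f \<longleftrightarrow> Vector_Spaces.linear s1 s2 f \<and> bij f \<and> (\<forall>x y. f (br1 x y) = br2 (f y) (f x))"

definition nondeg_even_pairing :: "(complex \<Rightarrow> 'm::ab_group_add \<Rightarrow> 'm) \<Rightarrow> (nat \<Rightarrow> 'm set) \<Rightarrow> (complex \<Rightarrow> 'n::ab_group_add \<Rightarrow> 'n) \<Rightarrow> (nat \<Rightarrow> 'n set)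
    \<Rightarrow> ('m \<Rightarrow> 'n \<Rightarrow> complex) \<Rightarrow> bool" where
  "nondeg_even_pairing s1 W1 s2 W2 psi \<longleftrightarrow> bilinear_map s1 s2 (*) psi
    \<and> (\<forall>p q m n. p < 2 \<longrightarrow> q < 2 \<longrightarrow> p \<noteq> q \<longrightarrow> m \<in> W1 p \<longrightarrow> n \<in> W2 q \<longrightarrow> psi m n = 0)
    \<and> (\<forall>m. (\<forall>n. psi m n = 0) \<longrightarrow> m = 0) \<and> (\<forall>n. (\<forall>m. psi m n = 0) \<longrightarrow> n = 0)"

definition del :: "nat \<Rightarrow> 'a list \<Rightarrow> 'a list" where
  "del i xs = take i xs @ drop (Suc i) xs"

text \<open>kk V xs i = sum over l < i of (parity(x_l) + 1); this is k_{i-1} of the paper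
  for the 0-indexed position i.\<close>
definition kk :: "(nat \<Rightarrow> 'g::zero set) \<Rightarrow> 'g list \<Rightarrow> nat \<Rightarrow> nat" where
  "kk V xs i = (\<Sum>l<i. par V (xs ! l) + 1)"

text \<open>Cochains C^n(g,M) = Hom(Sym^n(Pi g), M), represented as multilinear maps on
  lists of length n which are supersymmetric w.r.t. the parity-shifted grading.\<close>
definition cochain :: "(complex \<Rightarrow> 'g::ab_group_add \<Rightarrow> 'g) \<Rightarrow> (nat \<Rightarrow> 'g set) \<Rightarrow> (complex \<Rightarrow> 'm::ab_group_add \<Rightarrow> 'm)
    \<Rightarrow> nat \<Rightarrow> ('g list \<Rightarrow> 'm) \<Rightarrow> bool" where
  "cochain sc V scm n f \<longleftrightarrow>
     (\<forall>xs i. length xs = n \<longrightarrow> i < n \<longrightarrow> Vector_Spaces.linear sc scm (\<lambda>y. f (xs[i := y])))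
   \<and> (\<forall>xs i. length xs = n \<longrightarrow> Suc i < n \<longrightarrow> homog V (xs ! i) \<longrightarrow> homog V (xs ! Suc i) \<longrightarrow>
        f (xs[i := xs ! Suc i, Suc i := xs ! i])
          = scm (sgn ((par V (xs ! i) + 1) * (par V (xs ! Suc i) + 1))) (f xs))"

text \<open>Homogeneous component of parity p of a cochain, evaluated on homogeneous
  arguments xs (x_1...x_n has degree kk V xs (length xs) in Sym^n(Pi g)).\<close>
definition fcomp :: "(nat \<Rightarrow> 'g::zero set) \<Rightarrow> (nat \<Rightarrow> 'm::ab_group_add set) \<Rightarrow> nat \<Rightarrow> ('g list \<Rightarrow> 'm) \<Rightarrow> 'g list \<Rightarrow> 'm" where
  "fcomp V W p f xs = proj W (p + kk V xs (length xs)) (f xs)"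

text \<open>The differential d_n applied to the parity-p component (fbar = p),
  evaluated on a homogeneous list xs = [x_1,...,x_{n+1}].\<close>
definition dpart :: "(complex \<Rightarrow> 'm::ab_group_add \<Rightarrow> 'm) \<Rightarrow> (nat \<Rightarrow> 'g::zero set) \<Rightarrow> ('g \<Rightarrow> 'g \<Rightarrow> 'g)
    \<Rightarrow> (nat \<Rightarrow> 'm set) \<Rightarrow> ('g \<Rightarrow> 'm \<Rightarrow> 'm) \<Rightarrow> nat \<Rightarrow> ('g list \<Rightarrow> 'm) \<Rightarrow> 'g list \<Rightarrow> 'm" where
  "dpart scm V br W act p f xs =
     (\<Sum>i<length xs. scm (sgn (par V (xs ! i) + (p + kk V xs i) * (par V (xs ! i) + 1)))
                       (act (xs ! i) (fcomp V W p f (del i xs))))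
   + (\<Sum>(i,j)\<in>{(i,j). i < j \<and> j < length xs}.
        scm (sgn (p + (kk V xs i + 1) * (par V (xs ! i) + 1)
                    + (kk V xs j + par V (xs ! i) + 1) * (par V (xs ! j) + 1)))
            (fcomp V W p f (br (xs ! i) (xs ! j) # del i (del j xs))))"

text \<open>d_n f = d_n f_0 + d_n f_1 (linear extension from homogeneous cochains).\<close>
definition dcoch :: "(complex \<Rightarrow> 'm::ab_group_add \<Rightarrow> 'm) \<Rightarrow> (nat \<Rightarrow> 'g::zero set) \<Rightarrow> ('g \<Rightarrow> 'g \<Rightarrow> 'g)
    \<Rightarrow> (nat \<Rightarrow> 'm set) \<Rightarrow> ('g \<Rightarrow> 'm \<Rightarrow> 'm) \<Rightarrow> ('g list \<Rightarrow> 'm) \<Rightarrow> 'g list \<Rightarrow> 'm" where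
  "dcoch scm V br W act f xs = dpart scm V br W act 0 f xs + dpart scm V br W act 1 f xs"

text \<open>Chains C_n(g,M) = M (x) Sym^n(Pi g): an element is represented by a finite
  linear combination of generators alpha (x) x_1...x_n with homogeneous alpha, x_i,
  i.e. by a list of triples (c, alpha, [x_1,...,x_n]).\<close>
type_synonym ('m,'g) chain = "(complex \<times> 'm \<times> 'g list) list"

definition is_chain :: "(nat \<Rightarrow> 'g set) \<Rightarrow> (nat \<Rightarrow> 'm set) \<Rightarrow> nat \<Rightarrow> ('m,'g) chain \<Rightarrow> bool" where
  "is_chain V W n P \<longleftrightarrow> (\<forall>(c,a,xs)\<in>set P. homog W a \<and> length xs = n \<and> (\<forall>x\<in>set xs. homog V x))"

definition bd_gen :: "(nat \<Rightarrow> 'g::zero set) \<Rightarrow> ('g \<Rightarrow> 'g \<Rightarrow> 'g) \<Rightarrow> (nat \<Rightarrow> 'm::zero set) \<Rightarrow> ('g \<Rightarrow> 'm \<Rightarrow> 'm)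
    \<Rightarrow> 'm \<Rightarrow> 'g list \<Rightarrow> ('m,'g) chain" where
  "bd_gen V br W act a xs =
     map (\<lambda>i. (sgn ((par W a + kk V xs i) * (par V (xs ! i) + 1)), act (xs ! i) a, del i xs)) [0..<length xs]
   @ concat (map (\<lambda>j. map (\<lambda>i. (sgn (1 + par W a + (kk V xs i + 1) * (par V (xs ! i) + 1)
                                     + (kk V xs j + par V (xs ! i) + 1) * (par V (xs ! j) + 1)),
                               a, br (xs ! i) (xs ! j) # del i (del j xs))) [0..<j]) [0..<length xs])"

definition bd :: "(nat \<Rightarrow> 'g::zero set) \<Rightarrow> ('g \<Rightarrow> 'g \<Rightarrow> 'g) \<Rightarrow> (nat \<Rightarrow> 'm::zero set) \<Rightarrow> ('g \<Rightarrow> 'm \<Rightarrow> 'm)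
    \<Rightarrow> ('m,'g) chain \<Rightarrow> ('m,'g) chain" where
  "bd V br W act P = concat (map (\<lambda>(c,a,xs). map (\<lambda>(c',a',ys). (c * c', a', ys)) (bd_gen V br W act a xs)) P)"

definition Psi_n :: "(nat \<Rightarrow> 'b::zero set) \<Rightarrow> ('b \<Rightarrow> 'a) \<Rightarrow> ('m1 \<Rightarrow> 'm2 \<Rightarrow> complex)
    \<Rightarrow> ('a list \<Rightarrow> 'm1) \<Rightarrow> ('m2,'b) chain \<Rightarrow> complex" where
  "Psi_n V2 t psi f P = (\<Sum>(c,a,xs)\<leftarrow>P. c * sgn (\<Sum>x\<leftarrow>xs. par V2 x) * psi (f (rev (map t xs))) a)"

end

theory Submission
  imports Defs
begin

lemma lin_hom: "Vector_Spaces.linear s1 s2 f \<Longrightarrow> module_hom s1 s2 f"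
  by (simp add: module_hom_iff_linear)

lemma lin_add: "Vector_Spaces.linear s1 s2 f \<Longrightarrow> f (x + y) = f x + f y"
  using lin_hom module_hom.add by blast
lemma lin_scale: "Vector_Spaces.linear s1 s2 f \<Longrightarrow> f (s1 c x) = s2 c (f x)"
  using lin_hom module_hom.scale by blast
lemma lin_zero: "Vector_Spaces.linear s1 s2 f \<Longrightarrow> f 0 = 0"
  using lin_hom module_hom.zero by blast
lemma lin_diff: "Vector_Spaces.linear s1 s2 f \<Longrightarrow> f (x - y) = f x - f y"
  using lin_hom module_hom.diff by blast
lemma lin_sum: "Vector_Spaces.linear s1 s2 f \<Longrightarrow> f (sum g A) = (\<Sum>a\<in>A. f (g a))"
  using lin_hom module_hom.sum by blast

lemma ss_vs: "super_space sc V \<Longrightarrow> vector_space sc"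
  by (simp add: super_space_def)
lemma ss_sub: "super_space sc V \<Longrightarrow> p < 2 \<Longrightarrow> module.subspace sc (V p)"
  by (auto simp: super_space_def less_2_cases_iff)
lemma ss_zero: "super_space sc V \<Longrightarrow> p < 2 \<Longrightarrow> 0 \<in> V p"
  using ss_sub ss_vs module.subspace_0 module_iff_vector_space by metis
lemma ss_add: "super_space sc V \<Longrightarrow> p < 2 \<Longrightarrow> x \<in> V p \<Longrightarrow> y \<in> V p \<Longrightarrow> x + y \<in> V p"
  using ss_sub ss_vs module.subspace_add module_iff_vector_space by metis
lemma ss_scale: "super_space sc V \<Longrightarrow> p < 2 \<Longrightarrow> x \<in> V p \<Longrightarrow> sc c x \<in> V p"
  using ss_sub ss_vs module.subspace_scale module_iff_vector_space by metis
lemma ss_diff: "super_space sc V \<Longrightarrow> p < 2 \<Longrightarrow> x \<in> V p \<Longrightarrow> y \<in> V p \<Longrightarrow> x - y \<in> V p"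
  using ss_sub ss_vs module.subspace_diff module_iff_vector_space by metis
lemma ss_decomp: "super_space sc V \<Longrightarrow> \<exists>a b. a \<in> V 0 \<and> b \<in> V 1 \<and> v = a + b"
  unfolding super_space_def by (metis fst_conv snd_conv)
lemma ss_unique: "super_space sc V \<Longrightarrow> a \<in> V 0 \<Longrightarrow> b \<in> V 1 \<Longrightarrow> a' \<in> V 0 \<Longrightarrow> b' \<in> V 1
   \<Longrightarrow> a + b = a' + b' \<Longrightarrow> a = a' \<and> b = b'"
  unfolding super_space_def
  by (metis (no_types, lifting) fst_conv snd_conv)
lemma ss_inter: "super_space sc V \<Longrightarrow> x \<in> V 0 \<Longrightarrow> x \<in> V 1 \<Longrightarrow> x = 0"
  using ss_unique[of sc V x 0 0 x] ss_zero[of sc V] by auto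

lemma par_lt: "par V x < 2" by (simp add: par_def)
lemma par_cases: "par V x = 0 \<or> par V x = 1" by (simp add: par_def)

lemma homog_in: "super_space sc V \<Longrightarrow> homog V x \<Longrightarrow> x \<in> V (par V x)"
  unfolding homog_def par_def using ss_zero[of sc V 0] by auto

lemma par_of_in: "super_space sc V \<Longrightarrow> q < 2 \<Longrightarrow> x \<in> V q \<Longrightarrow> x \<noteq> 0 \<Longrightarrow> par V x = q"
  unfolding par_def using ss_inter[of sc V x] by (auto simp: less_2_cases_iff)

lemma proj_comp: assumes S: "super_space sc W" and a: "a \<in> W 0" and b: "b \<in> W 1"
  shows "proj W q (a + b) = (if q mod 2 = 0 then a else b)"
proof (cases "q mod 2 = 0")
  case T: True
  hence s: "Suc q mod 2 = 1" by presburger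
  have "(THE x. x \<in> W 0 \<and> a + b - x \<in> W 1) = a"
  proof (rule the_equality)
    show "a \<in> W 0 \<and> a + b - a \<in> W 1" using a b by simp
    fix a' assume h: "a' \<in> W 0 \<and> a + b - a' \<in> W 1"
    have e: "a' + (a + b - a') = a + b" by simp
    show "a' = a" using ss_unique[OF S _ _ a b e] h by blast
  qed
  thus ?thesis unfolding proj_def using T s by simp
next
  case F: False
  hence t: "q mod 2 = 1" by presburger
  hence s: "Suc q mod 2 = 0" by presburger
  have "(THE x. x \<in> W 1 \<and> a + b - x \<in> W 0) = b"
  proof (rule the_equality)
    show "b \<in> W 1 \<and> a + b - b \<in> W 0" using a b by simp
    fix b' assume h: "b' \<in> W 1 \<and> a + b - b' \<in> W 0"
    have e: "(a + b - b') + b' = a + b" by simp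
    show "b' = b" using ss_unique[OF S _ _ a b e] h by blast
  qed
  thus ?thesis unfolding proj_def using t s by simp
qed

lemma proj_in: assumes S: "super_space sc W" and r: "r < 2" and m: "m \<in> W r"
  shows "proj W q m = (if q mod 2 = r then m else 0)"
proof (cases "r = 0")
  case True
  then show ?thesis using proj_comp[OF S, of m 0 q] m ss_zero[OF S, of 1] by auto
next
  case False
  hence "r = 1" using r by auto
  then show ?thesis using proj_comp[OF S, of 0 m q] m ss_zero[OF S, of 0] by auto
qed

lemma exists_functional:
  assumes "vector_space sc" and "v \<noteq> 0"
  shows "\<exists>\<phi>. Vector_Spaces.linear sc (*) \<phi> \<and> \<phi> v \<noteq> (0::complex)"
proof -
  interpret vector_space sc by fact
  obtain B where B: "independent B" "UNIV \<subseteq> span B" using basis_exists[of UNIV] by blast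
  have "\<exists>b. representation B v b \<noteq> 0"
  proof (rule ccontr)
    assume "\<not> ?thesis"
    hence "{b. representation B v b \<noteq> 0} = {}" by auto
    with sum_nonzero_representation_eq[OF B(1), of v] B(2) have "v = 0" by auto
    with assms show False by simp
  qed
  then obtain b where "representation B v b \<noteq> 0" by blast
  moreover have "Vector_Spaces.linear sc (*) (\<lambda>v. representation B v b)"
    using linear_representation B by blast
  ultimately show ?thesis by blast
qed


lemma sgn_eq: "(even (a::nat) \<longleftrightarrow> even b) \<Longrightarrow> sgn a = sgn b"
  by (metis minus_one_power_iff)
lemma sgn_add: "sgn a * sgn b = sgn (a + b)" by (simp add: power_add)
lemma sgn_sq: "sgn a * sgn a = 1" by (simp flip: power_mult_distrib)
lemma mod2_eq_iff: "((a::nat) mod 2 = b mod 2) \<longleftrightarrow> (even a \<longleftrightarrow> even b)" by presburger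

definition ks :: "(nat \<Rightarrow> 'g::zero set) \<Rightarrow> 'g list \<Rightarrow> nat" where
  "ks V xs = sum_list (map (\<lambda>x. par V x + 1) xs)"
definition sp :: "(nat \<Rightarrow> 'g::zero set) \<Rightarrow> 'g list \<Rightarrow> nat" where
  "sp V xs = sum_list (map (par V) xs)"

lemma ks_simps[simp]: "ks V [] = 0" "ks V (x # xs) = par V x + 1 + ks V xs" "ks V (xs @ ys) = ks V xs + ks V ys"
  "ks V (rev xs) = ks V xs"
  by (simp_all add: ks_def flip: rev_map)
lemma sp_simps[simp]: "sp V [] = 0" "sp V (x # xs) = par V x + sp V xs" "sp V (xs @ ys) = sp V xs + sp V ys"
  "sp V (rev xs) = sp V xs"
  by (simp_all add: sp_def flip: rev_map)

lemma kk_take: "i \<le> length xs \<Longrightarrow> kk V xs i = ks V (take i xs)"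
proof (induction i)
  case 0 then show ?case by (simp add: kk_def)
next
  case (Suc i)
  have "take (Suc i) xs = take i xs @ [xs ! i]" using Suc.prems by (simp add: take_Suc_conv_app_nth)
  then show ?case using Suc by (simp add: kk_def)
qed

lemma kk_app: "kk V (P @ Q) (length P) = ks V P"
  by (simp add: kk_take)

lemma del_at: "del (length P) (P @ y # Q) = P @ Q" by (simp add: del_def)


locale PA =
  fixes sc1 :: "complex \<Rightarrow> 'g1::ab_group_add \<Rightarrow> 'g1" and V1 :: "nat \<Rightarrow> 'g1 set" and br1 :: "'g1 \<Rightarrow> 'g1 \<Rightarrow> 'g1"
    and sc2 :: "complex \<Rightarrow> 'g2::ab_group_add \<Rightarrow> 'g2" and V2 :: "nat \<Rightarrow> 'g2 set" and br2 :: "'g2 \<Rightarrow> 'g2 \<Rightarrow> 'g2"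
    and scm1 :: "complex \<Rightarrow> 'm1::ab_group_add \<Rightarrow> 'm1" and W1 :: "nat \<Rightarrow> 'm1 set" and act1 :: "'g1 \<Rightarrow> 'm1 \<Rightarrow> 'm1"
    and scm2 :: "complex \<Rightarrow> 'm2::ab_group_add \<Rightarrow> 'm2" and W2 :: "nat \<Rightarrow> 'm2 set" and act2 :: "'g2 \<Rightarrow> 'm2 \<Rightarrow> 'm2"
    and t :: "'g2 \<Rightarrow> 'g1" and psi :: "'m1 \<Rightarrow> 'm2 \<Rightarrow> complex"
  assumes LS1: "lie_superalgebra sc1 V1 br1" and LS2: "lie_superalgebra sc2 V2 br2"
    and LM1: "lie_supermodule sc1 V1 br1 scm1 W1 act1" and LM2: "lie_supermodule sc2 V2 br2 scm2 W2 act2"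
    and TT: "even_linear_iso sc2 V2 sc1 V1 t"
    and PP: "nondeg_even_pairing scm1 W1 scm2 W2 psi"
begin

lemma S1: "super_space sc1 V1" using LS1 by (simp add: lie_superalgebra_def)
lemma S2: "super_space sc2 V2" using LS2 by (simp add: lie_superalgebra_def)
lemma SM1: "super_space scm1 W1" using LM1 by (simp add: lie_supermodule_def)
lemma SM2: "super_space scm2 W2" using LM2 by (simp add: lie_supermodule_def)

lemma t_lin: "Vector_Spaces.linear sc2 sc1 t" using TT by (simp add: even_linear_iso_def)
lemma t_bij: "bij t" using TT by (simp add: even_linear_iso_def)
lemma t_even: "p < 2 \<Longrightarrow> x \<in> V2 p \<Longrightarrow> t x \<in> V1 p" using TT by (auto simp add: even_linear_iso_def)
lemma t_zero[simp]: "t 0 = 0" using lin_zero[OF t_lin] .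
lemma t_eq0[simp]: "t x = 0 \<longleftrightarrow> x = 0"
  using t_bij t_zero by (metis bij_pointE)

lemma par_t: "homog V2 x \<Longrightarrow> par V1 (t x) = par V2 x"
proof -
  assume h: "homog V2 x"
  have "x \<in> V2 (par V2 x)" using homog_in[OF S2 h] .
  hence "t x \<in> V1 (par V2 x)" using t_even par_lt by blast
  show ?thesis
  proof (cases "x = 0")
    case True then show ?thesis by (simp add: par_def)
  next
    case False
    then show ?thesis using par_of_in[OF S1 par_lt \<open>t x \<in> V1 (par V2 x)\<close>] by simp
  qed
qed

lemma homog_t: "homog V2 x \<Longrightarrow> homog V1 (t x)"
proof -
  assume h: "homog V2 x"
  have "t x \<in> V1 (par V2 x)" using homog_in[OF S2 h] t_even par_lt by blast
  thus ?thesis using par_cases[of V2 x] unfolding homog_def by auto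
qed

lemma ks_t: "\<forall>x\<in>set xs. homog V2 x \<Longrightarrow> ks V1 (map t xs) = ks V2 xs"
  by (induction xs) (auto simp: par_t)
lemma sp_t: "\<forall>x\<in>set xs. homog V2 x \<Longrightarrow> sp V1 (map t xs) = sp V2 xs"
  by (induction xs) (auto simp: par_t)

lemma psi_linL: "Vector_Spaces.linear scm1 (*) (\<lambda>m. psi m b)"
  using PP by (simp add: nondeg_even_pairing_def bilinear_map_def)
lemma psi_linR: "Vector_Spaces.linear scm2 (*) (psi m)"
  using PP by (simp add: nondeg_even_pairing_def bilinear_map_def)
lemma psi_addL: "psi (m + m') b = psi m b + psi m' b" using lin_add[OF psi_linL] .
lemma psi_scaleL: "psi (scm1 c m) b = c * psi m b" using lin_scale[OF psi_linL] by simp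
lemma psi_zeroL[simp]: "psi 0 b = 0" using lin_zero[OF psi_linL] .
lemma psi_sumL: "psi (sum g A) b = (\<Sum>x\<in>A. psi (g x) b)" using lin_sum[OF psi_linL] .
lemma psi_addR: "psi m (b + b') = psi m b + psi m b'" using lin_add[OF psi_linR] .
lemma psi_scaleR: "psi m (scm2 c b) = c * psi m b" using lin_scale[OF psi_linR] by simp
lemma psi_zeroR[simp]: "psi m 0 = 0" using lin_zero[OF psi_linR] .
lemma psi_even: "p < 2 \<Longrightarrow> q < 2 \<Longrightarrow> p \<noteq> q \<Longrightarrow> m \<in> W1 p \<Longrightarrow> b \<in> W2 q \<Longrightarrow> psi m b = 0"
  using PP by (simp add: nondeg_even_pairing_def)
lemma psi_nd1: "(\<And>b. psi m b = 0) \<Longrightarrow> m = 0"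
  using PP by (simp add: nondeg_even_pairing_def)

lemma psi_proj: assumes r: "r < 2" and b: "b \<in> W2 r"
  shows "psi (proj W1 q m) b = (if q mod 2 = r then psi m b else 0)"
proof -
  obtain m0 m1 where m: "m0 \<in> W1 0" "m1 \<in> W1 1" "m = m0 + m1" using ss_decomp[OF SM1] by blast
  have e0: "r \<noteq> 0 \<Longrightarrow> psi m0 b = 0" using psi_even[of 0 r m0 b] r b m by auto
  have e1: "r \<noteq> 1 \<Longrightarrow> psi m1 b = 0" using psi_even[of 1 r m1 b] r b m by auto
  have pc: "proj W1 q m = (if q mod 2 = 0 then m0 else m1)" using proj_comp[OF SM1 m(1,2), of q] m(3) by simp
  have ps: "psi m b = psi m0 b + psi m1 b" using m(3) psi_addL by simp
  consider "r = 0" | "r = 1" using r by linarith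
  then show ?thesis
  proof cases
    case 1 with e1 pc ps show ?thesis by auto
  next
    case 2 with e0 pc ps show ?thesis by auto
  qed
qed

lemma scm1_scale: "scm1 a (scm1 b m) = scm1 (a * b) m"
  using ss_vs[OF SM1] unfolding vector_space_def by blast
lemma scm1_one: "scm1 1 m = m"
  using ss_vs[OF SM1] unfolding vector_space_def by blast

lemma br2_in_all: "\<forall>p q x y. p < 2 \<longrightarrow> q < 2 \<longrightarrow> x \<in> V2 p \<longrightarrow> y \<in> V2 q \<longrightarrow> br2 x y \<in> V2 ((p + q) mod 2)"
  using LS2 unfolding lie_superalgebra_def by blast
lemma br2_in: "p < 2 \<Longrightarrow> q < 2 \<Longrightarrow> x \<in> V2 p \<Longrightarrow> y \<in> V2 q \<Longrightarrow> br2 x y \<in> V2 ((p + q) mod 2)"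
  using br2_in_all by blast
lemma br1_in_all: "\<forall>p q x y. p < 2 \<longrightarrow> q < 2 \<longrightarrow> x \<in> V1 p \<longrightarrow> y \<in> V1 q \<longrightarrow> br1 x y \<in> V1 ((p + q) mod 2)"
  using LS1 unfolding lie_superalgebra_def by blast
lemma br1_in: "p < 2 \<Longrightarrow> q < 2 \<Longrightarrow> x \<in> V1 p \<Longrightarrow> y \<in> V1 q \<Longrightarrow> br1 x y \<in> V1 ((p + q) mod 2)"
  using br1_in_all by blast
lemma act2_in: "homog V2 x \<Longrightarrow> homog W2 a \<Longrightarrow> act2 x a \<in> W2 ((par V2 x + par W2 a) mod 2)"
proof -
  assume h: "homog V2 x" "homog W2 a"
  have "\<forall>p q x m. p < 2 \<longrightarrow> q < 2 \<longrightarrow> x \<in> V2 p \<longrightarrow> m \<in> W2 q \<longrightarrow> act2 x m \<in> W2 ((p + q) mod 2)"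
    using LM2 unfolding lie_supermodule_def by blast
  from this[rule_format, OF par_lt par_lt homog_in[OF S2 h(1)] homog_in[OF SM2 h(2)]] show ?thesis .
qed

end

context PA begin

lemma coch_lin: "cochain sc1 V1 scm1 n f \<Longrightarrow> length xs = n \<Longrightarrow> i < n \<Longrightarrow> Vector_Spaces.linear sc1 scm1 (\<lambda>y. f (xs[i := y]))"
  unfolding cochain_def by blast

lemma coch_zero: assumes "cochain sc1 V1 scm1 n f" "length xs = n" "i < n" "xs ! i = 0"
  shows "f xs = 0"
proof -
  have "f (xs[i := 0]) = 0" using lin_zero[OF coch_lin[OF assms(1-3)]] .
  moreover have "xs[i := 0] = xs" using assms(4) by (metis list_update_id)
  ultimately show ?thesis by simp
qed

lemma coch_swap: assumes f: "cochain sc1 V1 scm1 n f" and l: "length (A @ z # w # B) = n"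
    and hz: "homog V1 z" and hw: "homog V1 w"
  shows "f (A @ w # z # B) = scm1 (sgn ((par V1 z + 1) * (par V1 w + 1))) (f (A @ z # w # B))"
proof -
  let ?xs = "A @ z # w # B" and ?i = "length A"
  have sw: "\<forall>xs i. length xs = n \<longrightarrow> Suc i < n \<longrightarrow> homog V1 (xs ! i) \<longrightarrow> homog V1 (xs ! Suc i) \<longrightarrow>
        f (xs[i := xs ! Suc i, Suc i := xs ! i])
          = scm1 (sgn ((par V1 (xs ! i) + 1) * (par V1 (xs ! Suc i) + 1))) (f xs)"
    using f unfolding cochain_def by blast
  have n1: "?xs ! ?i = z" by simp
  have n2: "?xs ! Suc ?i = w" by (simp add: nth_append)
  have u: "?xs[?i := w, Suc ?i := z] = A @ w # z # B"
    by (simp add: list_update_append)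
  have lt: "Suc ?i < n" using l by simp
  show ?thesis using sw[rule_format, OF l lt] n1 n2 u hz hw by simp
qed

lemma coch_move: assumes f: "cochain sc1 V1 scm1 n f"
  shows "length (A @ z # R) = n \<Longrightarrow> homog V1 z \<Longrightarrow> \<forall>w\<in>set R. homog V1 w \<Longrightarrow>
    f (A @ z # R) = scm1 (sgn ((par V1 z + 1) * ks V1 R)) (f (A @ R @ [z]))"
proof (induction R arbitrary: A)
  case Nil
  then show ?case by (simp add: scm1_one)
next
  case (Cons w R)
  have hw: "homog V1 w" using Cons.prems by simp
  have s1: "f (A @ z # w # R) = scm1 (sgn ((par V1 w + 1) * (par V1 z + 1))) (f (A @ w # z # R))"
    using coch_swap[OF f _ hw Cons.prems(2), of A R] Cons.prems(1) by simp
  have s2: "f ((A @ [w]) @ z # R) = scm1 (sgn ((par V1 z + 1) * ks V1 R)) (f ((A @ [w]) @ R @ [z]))"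
    using Cons.IH[of "A @ [w]"] Cons.prems by simp
  have e: "sgn ((par V1 w + 1) * (par V1 z + 1)) * sgn ((par V1 z + 1) * ks V1 R)
      = sgn ((par V1 z + 1) * ks V1 (w # R))"
    by (simp add: sgn_add algebra_simps)
  show ?case using s1 s2 e by (simp add: scm1_scale)
qed

end

lemma sgn_mul_eq: "(even (X + Y) \<longleftrightarrow> even (Z + W)) \<Longrightarrow> sgn X * (sgn Y * (c::complex)) = sgn Z * sgn W * c"
  by (metis mult.assoc sgn_add sgn_eq)

locale PB0 = PA +
  assumes P2: "\<forall>x m1 m2. psi m1 (act2 x m2) = psi (act1 (t x) m1) m2"
begin

lemma act_term:
  assumes f: "cochain sc1 V1 scm1 n f" and len: "length xs = Suc n"
    and hx: "\<forall>x\<in>set xs. homog V2 x" and ha: "homog W2 a" and i: "i < Suc n"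
    and ys: "ys = rev (map t xs)" and k: "k = n - i"
  shows "sgn (sp V2 xs) * (sgn (par V1 (ys!i) + (0 + kk V1 ys i) * (par V1 (ys!i) + 1)) * psi (act1 (ys!i) (fcomp V1 W1 0 f (del i ys))) a
          + sgn (par V1 (ys!i) + (1 + kk V1 ys i) * (par V1 (ys!i) + 1)) * psi (act1 (ys!i) (fcomp V1 W1 1 f (del i ys))) a)
    = sgn ((par W2 a + kk V2 xs k) * (par V2 (xs ! k) + 1)) * sgn (sp V2 (del k xs)) * psi (f (rev (map t (del k xs)))) (act2 (xs ! k) a)"
proof -
  have kl: "k < length xs" using len k by simp
  define A where "A = take k xs"
  define C where "C = drop (Suc k) xs"
  define x where "x = xs ! k"
  have xs: "xs = A @ x # C" unfolding A_def C_def x_def using id_take_nth_drop[OF kl] .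
  have lA: "length A = k" using kl by (simp add: A_def)
  have lC: "length C = i" using len k i by (simp add: C_def)
  have hA: "\<forall>y\<in>set A. homog V2 y" and hC: "\<forall>y\<in>set C. homog V2 y" and hxx: "homog V2 x"
    using hx unfolding xs by auto
  have ys2: "ys = rev (map t C) @ t x # rev (map t A)" using ys xs by simp
  have lrC: "length (rev (map t C)) = i" using lC by simp
  have yi: "ys ! i = t x" using ys2 lrC by (simp add: nth_append)
  have dy: "del i ys = rev (map t C) @ rev (map t A)" using ys2 del_at[of "rev (map t C)"] lrC by simp
  have kky: "kk V1 ys i = ks V2 C" using ys2 kk_app[of V1 "rev (map t C)"] lrC ks_t[OF hC] by simp
  have kkd: "kk V1 (del i ys) (length (del i ys)) = ks V2 C + ks V2 A"
    using dy kk_take[of "length (del i ys)" "del i ys" V1] ks_t[OF hC] ks_t[OF hA] by simp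
  have dx: "del k xs = A @ C" using xs lA del_at[of A x C] by simp
  have dxy: "rev (map t (del k xs)) = del i ys" using dx dy by simp
  have kkx: "kk V2 xs k = ks V2 A" using xs lA kk_app[of V2 A] by simp
  have spx: "sp V2 xs = sp V2 A + par V2 x + sp V2 C" using xs by simp
  have spd: "sp V2 (del k xs) = sp V2 A + sp V2 C" using dx by simp
  have pt: "par V1 (t x) = par V2 x" using par_t[OF hxx] .
  define F where "F = f (del i ys)"
  define r where "r = (par V2 x + par W2 a) mod 2"
  have r2: "r < 2" by (simp add: r_def)
  have ain: "act2 x a \<in> W2 r" using act2_in[OF hxx ha] by (simp add: r_def)
  have T: "psi (act1 (t x) (fcomp V1 W1 p f (del i ys))) a
     = (if (p + (ks V2 C + ks V2 A)) mod 2 = r then psi F (act2 x a) else 0)" for p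
  proof -
    have "psi (act1 (t x) (fcomp V1 W1 p f (del i ys))) a = psi (fcomp V1 W1 p f (del i ys)) (act2 x a)"
      using P2 by simp
    also have "\<dots> = psi (proj W1 (p + (ks V2 C + ks V2 A)) F) (act2 x a)"
      unfolding fcomp_def kkd F_def ..
    also have "\<dots> = (if (p + (ks V2 C + ks V2 A)) mod 2 = r then psi F (act2 x a) else 0)"
      using psi_proj[OF r2 ain] .
    finally show ?thesis .
  qed
  have xk: "xs ! k = x" by (simp add: x_def)
  have Ff: "f (del i ys) = F" by (simp add: F_def)
  have pxc: "par V2 x = 0 \<or> par V2 x = 1" and pac: "par W2 a = 0 \<or> par W2 a = 1" using par_cases by auto
  have G: "?thesis \<longleftrightarrow> sgn (sp V2 A + par V2 x + sp V2 C) *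
     (sgn (par V2 x + (0 + ks V2 C) * (par V2 x + 1)) * (if (0 + (ks V2 C + ks V2 A)) mod 2 = r then psi F (act2 x a) else 0)
    + sgn (par V2 x + (1 + ks V2 C) * (par V2 x + 1)) * (if (1 + (ks V2 C + ks V2 A)) mod 2 = r then psi F (act2 x a) else 0))
    = sgn ((par W2 a + ks V2 A) * (par V2 x + 1)) * sgn (sp V2 A + sp V2 C) * psi F (act2 x a)"
    by (simp only: yi pt kky T kkx spx spd xk dxy Ff)
  show ?thesis
  proof (cases "(0 + (ks V2 C + ks V2 A)) mod 2 = r")
    case True
    hence nt: "\<not> (1 + (ks V2 C + ks V2 A)) mod 2 = r" by presburger
    have "even (sp V2 A + par V2 x + sp V2 C + (par V2 x + (0 + ks V2 C) * (par V2 x + 1)))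
        \<longleftrightarrow> even ((par W2 a + ks V2 A) * (par V2 x + 1) + (sp V2 A + sp V2 C))"
      using True pxc pac unfolding r_def by (elim disjE) (simp_all, presburger+)
    then show ?thesis unfolding G using True nt by (simp only: simp_thms if_True if_False mult_zero_right add_0_right sgn_mul_eq)
  next
    case False
    hence nt: "(1 + (ks V2 C + ks V2 A)) mod 2 = r" unfolding r_def by presburger
    have "even (sp V2 A + par V2 x + sp V2 C + (par V2 x + (1 + ks V2 C) * (par V2 x + 1)))
        \<longleftrightarrow> even ((par W2 a + ks V2 A) * (par V2 x + 1) + (sp V2 A + sp V2 C))"
      using nt pxc pac unfolding r_def by (elim disjE) (simp_all, presburger+)
    then show ?thesis unfolding G using False nt by (simp only: simp_thms if_True if_False mult_zero_left mult_zero_right add_0_left sgn_mul_eq)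
  qed
qed

end

locale PB = PB0 +
  assumes anti: "\<forall>x y. t (br2 x y) = br1 (t y) (t x)"


lemma split2: assumes "k < l" "l < length xs"
  shows "\<exists>A M C. xs = A @ xs ! k # M @ xs ! l # C \<and> length A = k \<and> length M = l - Suc k \<and> length C = length xs - Suc l"
proof -
  have 1: "xs = take l xs @ xs ! l # drop (Suc l) xs" using id_take_nth_drop[OF assms(2)] .
  have kl: "k < length (take l xs)" using assms by simp
  have 2: "take l xs = take k (take l xs) @ (take l xs) ! k # drop (Suc k) (take l xs)"
    using id_take_nth_drop[OF kl] .
  have 3: "take k (take l xs) = take k xs" using assms by (simp add: min_def)
  have 4: "(take l xs) ! k = xs ! k" using assms by simp
  show ?thesis
    apply (rule exI[of _ "take k xs"], rule exI[of _ "drop (Suc k) (take l xs)"], rule exI[of _ "drop (Suc l) xs"])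
    using 1 2 3 4 assms by (metis append.assoc append_Cons length_drop length_take min.absorb4 min.strict_order_iff)
qed

lemma sgn_mul_eq3: "(even (X + Y + Z) \<longleftrightarrow> even (U + W)) \<Longrightarrow> sgn X * (sgn Y * (sgn Z * (c::complex))) = sgn U * sgn W * c"
  by (metis mult.assoc sgn_add sgn_eq)

context PB begin

lemma pair_term:
  assumes f: "cochain sc1 V1 scm1 n f" and len: "length xs = Suc n"
    and hx: "\<forall>x\<in>set xs. homog V2 x" and ha: "homog W2 a" and ij: "i < j" "j < Suc n"
    and ys: "ys = rev (map t xs)" and k: "k = n - j" and l: "l = n - i"
  shows "sgn (sp V2 xs) *
     (sgn (0 + (kk V1 ys i + 1) * (par V1 (ys ! i) + 1) + (kk V1 ys j + par V1 (ys ! i) + 1) * (par V1 (ys ! j) + 1))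
        * psi (fcomp V1 W1 0 f (br1 (ys ! i) (ys ! j) # del i (del j ys))) a
    + sgn (1 + (kk V1 ys i + 1) * (par V1 (ys ! i) + 1) + (kk V1 ys j + par V1 (ys ! i) + 1) * (par V1 (ys ! j) + 1))
        * psi (fcomp V1 W1 1 f (br1 (ys ! i) (ys ! j) # del i (del j ys))) a)
   = sgn (1 + par W2 a + (kk V2 xs k + 1) * (par V2 (xs ! k) + 1) + (kk V2 xs l + par V2 (xs ! k) + 1) * (par V2 (xs ! l) + 1))
     * sgn (sp V2 (br2 (xs ! k) (xs ! l) # del k (del l xs)))
     * psi (f (rev (map t (br2 (xs ! k) (xs ! l) # del k (del l xs))))) a"
proof -
  have kl: "k < l" "l < length xs" using ij len k l by auto
  obtain A M C where xs: "xs = A @ xs ! k # M @ xs ! l # C" and lA: "length A = k"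
     and lM: "length M = l - Suc k" and lC0: "length C = length xs - Suc l"
    using split2[OF kl] by blast
  define x where "x = xs ! k"
  define x' where "x' = xs ! l"
  have xs1: "xs = A @ x # M @ x' # C" using xs x_def x'_def by simp
  have lC: "length C = i" using lC0 len l ij by simp
  have lM2: "length C + Suc (length M) = j" using lM k l ij lC by simp
  have hA: "\<forall>y\<in>set A. homog V2 y" and hM: "\<forall>y\<in>set M. homog V2 y" and hC: "\<forall>y\<in>set C. homog V2 y"
    and hxx: "homog V2 x" and hxx': "homog V2 x'"
    using hx unfolding xs1 by auto
  have ys2: "ys = rev (map t C) @ t x' # rev (map t M) @ t x # rev (map t A)" using ys xs1 by simp
  have yi: "ys ! i = t x'" using ys2 lC by (simp add: nth_append)
  have yj: "ys ! j = t x"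
  proof -
    have "ys = (rev (map t C) @ t x' # rev (map t M)) @ t x # rev (map t A)" using ys2 by simp
    moreover have "length (rev (map t C) @ t x' # rev (map t M)) = j" using lM2 by simp
    ultimately show ?thesis by (metis nth_append_length)
  qed
  have dj: "del j ys = rev (map t C) @ t x' # rev (map t M) @ rev (map t A)"
    using del_at[of "rev (map t C) @ t x' # rev (map t M)" "t x" "rev (map t A)"] ys2 lM2 by simp
  have dij: "del i (del j ys) = rev (map t C) @ rev (map t M) @ rev (map t A)"
    using del_at[of "rev (map t C)" "t x'" "rev (map t M) @ rev (map t A)"] dj lC by simp
  have dl: "del l xs = A @ x # M @ C"
    using del_at[of "A @ x # M" x' C] xs1 lA lM kl by simp
  have dkl: "del k (del l xs) = A @ M @ C"
    using del_at[of A x "M @ C"] dl lA by simp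
  define D where "D = A @ M @ C"
  have hD: "\<forall>y\<in>set D. homog V2 y" using hA hM hC by (auto simp: D_def)
  have dijD: "del i (del j ys) = rev (map t D)" using dij by (simp add: D_def)
  have kyi: "kk V1 ys i = ks V2 C" using ys2 kk_app[of V1 "rev (map t C)"] lC ks_t[OF hC] by simp
  have kyj: "kk V1 ys j = ks V2 C + (par V2 x' + 1) + ks V2 M"
  proof -
    have "ys = (rev (map t C) @ t x' # rev (map t M)) @ t x # rev (map t A)" using ys2 by simp
    moreover have "length (rev (map t C) @ t x' # rev (map t M)) = j" using lM2 by simp
    ultimately have "kk V1 ys j = ks V1 (rev (map t C) @ t x' # rev (map t M))"
      using kk_app[of V1 "rev (map t C) @ t x' # rev (map t M)"] by metis
    thus ?thesis using ks_t[OF hC] ks_t[OF hM] par_t[OF hxx'] by simp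
  qed
  have kxk: "kk V2 xs k = ks V2 A" using xs1 lA kk_app[of V2 A] by simp
  have kxl: "kk V2 xs l = ks V2 A + (par V2 x + 1) + ks V2 M"
  proof -
    have "xs = (A @ x # M) @ x' # C" using xs1 by simp
    moreover have "length (A @ x # M) = l" using lA lM kl by simp
    ultimately have "kk V2 xs l = ks V2 (A @ x # M)" using kk_app[of V2 "A @ x # M"] by metis
    thus ?thesis by simp
  qed
  have spx: "sp V2 xs = sp V2 A + par V2 x + sp V2 M + par V2 x' + sp V2 C" using xs1 by simp
  have pyi: "par V1 (ys ! i) = par V2 x'" using yi par_t[OF hxx'] by simp
  have pyj: "par V1 (ys ! j) = par V2 x" using yj par_t[OF hxx] by simp
  define b where "b = br2 x x'"
  have br: "br1 (ys ! i) (ys ! j) = t b" using anti yi yj by (simp add: b_def)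
  have bin: "b \<in> V2 ((par V2 x + par V2 x') mod 2)"
    unfolding b_def by (rule br2_in[OF par_lt par_lt homog_in[OF S2 hxx] homog_in[OF S2 hxx']])
  have hb: "homog V2 b"
  proof -
    have "(par V2 x + par V2 x') mod 2 = 0 \<or> (par V2 x + par V2 x') mod 2 = 1" by presburger
    thus ?thesis using bin unfolding homog_def by (elim disjE) simp_all
  qed
  define Z where "Z = t b # rev (map t D)"
  have lD: "length D = n - 1" using len xs1 by (simp add: D_def)
  have lZ: "length Z = n" using lD ij by (simp add: Z_def)
  have kZ: "kk V1 Z (length Z) = par V2 b + 1 + ks V2 D"
    using kk_take[of "length Z" Z V1] ks_t[OF hD] par_t[OF hb] by (simp add: Z_def)
  have hZ: "\<forall>w\<in>set (rev (map t D)). homog V1 w" using hD homog_t by auto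
  have mv: "f Z = scm1 (sgn ((par V2 b + 1) * ks V2 D)) (f (rev (map t (b # D))))"
    using coch_move[OF f, of "[]" "t b" "rev (map t D)"] lZ homog_t[OF hb] hZ par_t[OF hb] ks_t[OF hD]
    by (simp add: Z_def)
  define G where "G = f (rev (map t (b # D)))"
  have ain: "a \<in> W2 (par W2 a)" using homog_in[OF SM2 ha] .
  have LT: "psi (fcomp V1 W1 p f (br1 (ys ! i) (ys ! j) # del i (del j ys))) a
      = (if (p + (par V2 b + 1 + ks V2 D)) mod 2 = par W2 a then sgn ((par V2 b + 1) * ks V2 D) * psi G a else 0)" for p
  proof -
    have "br1 (ys ! i) (ys ! j) # del i (del j ys) = Z" unfolding br dijD Z_def ..
    hence "psi (fcomp V1 W1 p f (br1 (ys ! i) (ys ! j) # del i (del j ys))) a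
        = psi (proj W1 (p + (par V2 b + 1 + ks V2 D)) (f Z)) a" unfolding fcomp_def by (simp add: kZ)
    also have "\<dots> = (if (p + (par V2 b + 1 + ks V2 D)) mod 2 = par W2 a then psi (f Z) a else 0)"
      using psi_proj[OF par_lt ain] .
    finally show ?thesis unfolding mv G_def psi_scaleL .
  qed
  have RT: "rev (map t (br2 x x' # del k (del l xs))) = rev (map t (b # D))"
    unfolding dkl D_def b_def ..
  have spR: "sp V2 (br2 x x' # del k (del l xs)) = par V2 b + sp V2 D"
    unfolding dkl D_def b_def by simp
  have spD: "sp V2 D = sp V2 A + sp V2 M + sp V2 C" by (simp add: D_def)
  have ksD: "ks V2 D = ks V2 A + ks V2 M + ks V2 C" by (simp add: D_def)
  have xk: "xs ! k = x" "xs ! l = x'" by (simp_all add: x_def x'_def)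
  have Gd: "f (rev (map t (b # D))) = G" by (simp add: G_def)
  have Geq: "?thesis \<longleftrightarrow>
    sgn (sp V2 A + par V2 x + sp V2 M + par V2 x' + sp V2 C) *
     (sgn (0 + (ks V2 C + 1) * (par V2 x' + 1) + (ks V2 C + (par V2 x' + 1) + ks V2 M + par V2 x' + 1) * (par V2 x + 1))
        * (if (0 + (par V2 b + 1 + ks V2 D)) mod 2 = par W2 a then sgn ((par V2 b + 1) * ks V2 D) * psi G a else 0)
    + sgn (1 + (ks V2 C + 1) * (par V2 x' + 1) + (ks V2 C + (par V2 x' + 1) + ks V2 M + par V2 x' + 1) * (par V2 x + 1))
        * (if (1 + (par V2 b + 1 + ks V2 D)) mod 2 = par W2 a then sgn ((par V2 b + 1) * ks V2 D) * psi G a else 0))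
   = sgn (1 + par W2 a + (ks V2 A + 1) * (par V2 x + 1) + (ks V2 A + (par V2 x + 1) + ks V2 M + par V2 x + 1) * (par V2 x' + 1))
     * sgn (par V2 b + sp V2 D) * psi G a"
    by (simp only: LT RT spR spx kyi kyj kxk kxl pyi pyj xk Gd)
  show ?thesis
  proof (cases "b = 0")
    case True
    have "G = 0" unfolding G_def
    proof (rule coch_zero[OF f, of _ "n - 1"])
      have n1: "n \<ge> 1" using ij by simp
      show "length (rev (map t (b # D))) = n" using lD n1 by simp
      show "n - 1 < n" using n1 by simp
      have "rev (map t (b # D)) = rev (map t D) @ [t b]" by simp
      moreover have "length (rev (map t D)) = n - 1" using lD by simp
      ultimately show "rev (map t (b # D)) ! (n - 1) = 0" using True by (metis nth_append_length t_zero)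
    qed
    then show ?thesis unfolding Geq by simp
  next
    case False
    have pb: "par V2 b = (par V2 x + par V2 x') mod 2" using par_of_in[OF S2 _ bin False] by simp
    have pxc: "par V2 x = 0 \<or> par V2 x = 1" and pxc': "par V2 x' = 0 \<or> par V2 x' = 1"
      and pac: "par W2 a = 0 \<or> par W2 a = 1" using par_cases by auto
    show ?thesis
    proof (cases "(0 + (par V2 b + 1 + ks V2 D)) mod 2 = par W2 a")
      case True
      hence nt: "\<not> (1 + (par V2 b + 1 + ks V2 D)) mod 2 = par W2 a" by presburger
      have "even (sp V2 A + par V2 x + sp V2 M + par V2 x' + sp V2 C
           + (0 + (ks V2 C + 1) * (par V2 x' + 1) + (ks V2 C + (par V2 x' + 1) + ks V2 M + par V2 x' + 1) * (par V2 x + 1))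
           + (par V2 b + 1) * ks V2 D)
        \<longleftrightarrow> even ((1 + par W2 a + (ks V2 A + 1) * (par V2 x + 1) + (ks V2 A + (par V2 x + 1) + ks V2 M + par V2 x + 1) * (par V2 x' + 1))
           + (par V2 b + sp V2 D))"
        using True pxc pxc' pac unfolding pb spD ksD by (elim disjE) (simp_all, presburger+)
      then show ?thesis unfolding Geq using True nt
        by (simp only: simp_thms if_True if_False mult_zero_right add_0_right sgn_mul_eq3)
    next
      case False
      hence nt: "(1 + (par V2 b + 1 + ks V2 D)) mod 2 = par W2 a" using par_lt[of W2 a] by presburger
      have "even (sp V2 A + par V2 x + sp V2 M + par V2 x' + sp V2 C
           + (1 + (ks V2 C + 1) * (par V2 x' + 1) + (ks V2 C + (par V2 x' + 1) + ks V2 M + par V2 x' + 1) * (par V2 x + 1))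
           + (par V2 b + 1) * ks V2 D)
        \<longleftrightarrow> even ((1 + par W2 a + (ks V2 A + 1) * (par V2 x + 1) + (ks V2 A + (par V2 x + 1) + ks V2 M + par V2 x + 1) * (par V2 x' + 1))
           + (par V2 b + sp V2 D))"
        using nt pxc pxc' pac unfolding pb spD ksD by (elim disjE) (simp_all, presburger+)
      then show ?thesis unfolding Geq using False nt
        by (simp only: simp_thms if_True if_False mult_zero_left mult_zero_right add_0_left sgn_mul_eq3)
    qed
  qed
qed

end

lemma Psi_single: "Psi_n V t psi f [(c, a, xs)] = c * sgn (sp V xs) * psi (f (rev (map t xs))) a"
  by (simp add: Psi_n_def sp_def)
lemma Psi_append: "Psi_n V t psi f (P @ Q) = Psi_n V t psi f P + Psi_n V t psi f Q"
  by (simp add: Psi_n_def)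
lemma Psi_Cons: "Psi_n V t psi f (p # Q) = Psi_n V t psi f [p] + Psi_n V t psi f Q"
  by (simp add: Psi_n_def)
lemma Psi_Nil: "Psi_n V t psi f [] = 0"
  by (simp add: Psi_n_def)
lemma Psi_map: "Psi_n V t psi f (map g xs) = sum_list (map (\<lambda>x. Psi_n V t psi f [g x]) xs)"
  by (induction xs) (simp add: Psi_Nil, metis Psi_Cons list.simps(9) sum_list.Cons)
lemma Psi_concat: "Psi_n V t psi f (concat L) = sum_list (map (Psi_n V t psi f) L)"
  by (induction L) (simp_all add: Psi_Nil Psi_append)
lemma sl_upt: "sum_list (map h [0..<N]) = (\<Sum>i<N. h i)"
  by (induction N) auto
lemma pairs_sum: "(\<Sum>l<(N::nat). \<Sum>k<l. g k l) = (\<Sum>(k,l)\<in>{(k,l). k<l \<and> l<N}. g k l)"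
proof -
  have "(\<Sum>l<N. \<Sum>k<l. g k l) = (\<Sum>(l,k)\<in>(SIGMA l:{..<N}. {..<l}). g k l)"
    using sum.Sigma[of "{..<N}" "\<lambda>l. {..<l}" "\<lambda>l k. g k l"] by simp
  also have "\<dots> = (\<Sum>(k,l)\<in>{(k,l). k<l \<and> l<N}. g k l)"
    by (rule sum.reindex_bij_witness[of _ "\<lambda>(k,l). (l,k)" "\<lambda>(l,k). (k,l)"]) auto
  finally show ?thesis .
qed

lemma Psi_scale_map: "Psi_n V t psi f (map (\<lambda>(c', y). (c * c', y)) L) = c * Psi_n V t psi f L"
  by (induction L) (auto simp: Psi_n_def algebra_simps)

lemma Psi_bd: "Psi_n V t psi f (bd V br W act P) = (\<Sum>(c,a,xs)\<leftarrow>P. c * Psi_n V t psi f (bd_gen V br W act a xs))"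
  by (induction P) (auto simp: bd_def Psi_Nil Psi_append Psi_scale_map)

lemma Psi_bd_gen: "Psi_n V t psi f (bd_gen V br W act a xs) =
   (\<Sum>k<length xs. sgn ((par W a + kk V xs k) * (par V (xs ! k) + 1)) * sgn (sp V (del k xs)) * psi (f (rev (map t (del k xs)))) (act (xs ! k) a))
 + (\<Sum>(k,l)\<in>{(k,l). k<l \<and> l<length xs}. sgn (1 + par W a + (kk V xs k + 1) * (par V (xs ! k) + 1) + (kk V xs l + par V (xs ! k) + 1) * (par V (xs ! l) + 1))
     * sgn (sp V (br (xs ! k) (xs ! l) # del k (del l xs)))
     * psi (f (rev (map t (br (xs ! k) (xs ! l) # del k (del l xs))))) a)"
  unfolding bd_gen_def Psi_append Psi_map Psi_concat sl_upt Psi_single map_map comp_def pairs_sum[symmetric]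
  by simp


context PA begin

lemma psi_dpart: "psi (dpart scm1 V1 br1 W1 act1 p f ys) a =
   (\<Sum>i<length ys. sgn (par V1 (ys ! i) + (p + kk V1 ys i) * (par V1 (ys ! i) + 1)) * psi (act1 (ys ! i) (fcomp V1 W1 p f (del i ys))) a)
 + (\<Sum>(i,j)\<in>{(i,j). i < j \<and> j < length ys}. sgn (p + (kk V1 ys i + 1) * (par V1 (ys ! i) + 1) + (kk V1 ys j + par V1 (ys ! i) + 1) * (par V1 (ys ! j) + 1))
        * psi (fcomp V1 W1 p f (br1 (ys ! i) (ys ! j) # del i (del j ys))) a)"
  unfolding dpart_def psi_addL psi_sumL
  by (intro arg_cong2[where f="(+)"] sum.cong) (auto simp: psi_scaleL)

end

context PB0 begin

lemma gen_split:
  fixes ys RA LB RB PS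
  assumes f: "cochain sc1 V1 scm1 n f" and len: "length xs = Suc n"
    and hx: "\<forall>x\<in>set xs. homog V2 x" and ha: "homog W2 a"
  and ysd: "ys = rev (map t xs)"
  and RAd: "RA = (\<lambda>k. sgn ((par W2 a + kk V2 xs k) * (par V2 (xs ! k) + 1)) * sgn (sp V2 (del k xs)) * psi (f (rev (map t (del k xs)))) (act2 (xs ! k) a))"
  and LBd: "LB = (\<lambda>p. (\<lambda>(i,j). sgn (p + (kk V1 ys i + 1) * (par V1 (ys ! i) + 1) + (kk V1 ys j + par V1 (ys ! i) + 1) * (par V1 (ys ! j) + 1))
        * psi (fcomp V1 W1 p f (br1 (ys ! i) (ys ! j) # del i (del j ys))) a))"
  and RBd: "RB = ((\<lambda>(k,l). sgn (1 + par W2 a + (kk V2 xs k + 1) * (par V2 (xs ! k) + 1) + (kk V2 xs l + par V2 (xs ! k) + 1) * (par V2 (xs ! l) + 1))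
     * sgn (sp V2 (br2 (xs ! k) (xs ! l) # del k (del l xs)))
     * psi (f (rev (map t (br2 (xs ! k) (xs ! l) # del k (del l xs))))) a))"
  and PSd: "PS = {(i,j). i < j \<and> j < Suc n}"
  shows "sgn (sp V2 xs) * psi (dcoch scm1 V1 br1 W1 act1 f ys) a
      = (\<Sum>k<Suc n. RA k) + (\<Sum>x\<in>PS. sgn (sp V2 xs) * (LB 0 x + LB 1 x))"
    and "Psi_n V2 t psi f (bd_gen V2 br2 W2 act2 a xs) = (\<Sum>k<Suc n. RA k) + sum RB PS"
proof -
  have ly: "length ys = Suc n" using len by (simp add: ysd)
  define LA where "LA p i = sgn (par V1 (ys ! i) + (p + kk V1 ys i) * (par V1 (ys ! i) + 1)) * psi (act1 (ys ! i) (fcomp V1 W1 p f (del i ys))) a" for p i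
  have dp: "psi (dpart scm1 V1 br1 W1 act1 p f ys) a = (\<Sum>i<Suc n. LA p i) + sum (LB p) PS" for p
    unfolding psi_dpart ly LA_def LBd PSd ..
  have L: "sgn (sp V2 xs) * psi (dcoch scm1 V1 br1 W1 act1 f ys) a
      = (\<Sum>i<Suc n. sgn (sp V2 xs) * (LA 0 i + LA 1 i)) + (\<Sum>x\<in>PS. sgn (sp V2 xs) * (LB 0 x + LB 1 x))"
    unfolding dcoch_def psi_addL dp by (simp add: sum.distrib sum_distrib_left sum_distrib_right algebra_simps)
  show "Psi_n V2 t psi f (bd_gen V2 br2 W2 act2 a xs) = (\<Sum>k<Suc n. RA k) + sum RB PS"
    unfolding Psi_bd_gen len RAd RBd PSd ..
  have A1: "(\<Sum>i<Suc n. sgn (sp V2 xs) * (LA 0 i + LA 1 i)) = (\<Sum>k<Suc n. RA k)"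
  proof (rule sum.reindex_bij_witness[of _ "\<lambda>k. n - k" "\<lambda>k. n - k"])
    fix i assume i: "i \<in> {..<Suc n}"
    show "RA (n - i) = sgn (sp V2 xs) * (LA 0 i + LA 1 i)"
      unfolding RAd LA_def
      using act_term[OF f len hx ha _ ysd refl, of i] i by simp
  qed auto
  show "sgn (sp V2 xs) * psi (dcoch scm1 V1 br1 W1 act1 f ys) a
      = (\<Sum>k<Suc n. RA k) + (\<Sum>x\<in>PS. sgn (sp V2 xs) * (LB 0 x + LB 1 x))"
    using L A1 by simp
qed

end

context PB begin

lemma gen_main:
  assumes f: "cochain sc1 V1 scm1 n f" and len: "length xs = Suc n"
    and hx: "\<forall>x\<in>set xs. homog V2 x" and ha: "homog W2 a"
  shows "sgn (sp V2 xs) * psi (dcoch scm1 V1 br1 W1 act1 f (rev (map t xs))) a = Psi_n V2 t psi f (bd_gen V2 br2 W2 act2 a xs)"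
proof -
  define ys where "ys = rev (map t xs)"
  define LB where "LB = (\<lambda>p. (\<lambda>(i,j). sgn (p + (kk V1 ys i + 1) * (par V1 (ys ! i) + 1) + (kk V1 ys j + par V1 (ys ! i) + 1) * (par V1 (ys ! j) + 1))
        * psi (fcomp V1 W1 p f (br1 (ys ! i) (ys ! j) # del i (del j ys))) a))"
  define PS where "PS = {(i,j). i < j \<and> j < Suc n}"
  define RB where "RB = (\<lambda>(k,l). sgn (1 + par W2 a + (kk V2 xs k + 1) * (par V2 (xs ! k) + 1) + (kk V2 xs l + par V2 (xs ! k) + 1) * (par V2 (xs ! l) + 1))
     * sgn (sp V2 (br2 (xs ! k) (xs ! l) # del k (del l xs)))
     * psi (f (rev (map t (br2 (xs ! k) (xs ! l) # del k (del l xs))))) a)"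
  define RA where "RA = (\<lambda>k. sgn ((par W2 a + kk V2 xs k) * (par V2 (xs ! k) + 1)) * sgn (sp V2 (del k xs)) * psi (f (rev (map t (del k xs)))) (act2 (xs ! k) a))"
  note GS = gen_split[OF f len hx ha ys_def RA_def LB_def RB_def PS_def]
  have A2: "(\<Sum>x\<in>PS. sgn (sp V2 xs) * (LB 0 x + LB 1 x)) = sum RB PS"
  proof (rule sum.reindex_bij_witness[of _ "\<lambda>(i,j). (n - j, n - i)" "\<lambda>(i,j). (n - j, n - i)"])
    fix x assume x: "x \<in> PS"
    then obtain i j where xij: "x = (i,j)" and ij: "i < j" "j < Suc n" by (auto simp: PS_def)
    show "RB (case x of (i, j) \<Rightarrow> (n - j, n - i)) = sgn (sp V2 xs) * (LB 0 x + LB 1 x)"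
      unfolding xij RB_def LB_def prod.case
      using pair_term[OF f len hx ha ij ys_def refl refl] by simp
  qed (auto simp: PS_def)
  show ?thesis using GS A2 by (simp add: ys_def)
qed

end

context PB begin

lemma back_dir:
  assumes f: "cochain sc1 V1 scm1 n f"
  shows "is_chain V2 W2 (Suc n) P \<Longrightarrow> Psi_n V2 t psi (dcoch scm1 V1 br1 W1 act1 f) P = Psi_n V2 t psi f (bd V2 br2 W2 act2 P)"
proof (induction P)
  case Nil
  then show ?case by (simp add: Psi_Nil Psi_bd)
next
  case (Cons p P)
  obtain c a xs where p: "p = (c, a, xs)" by (cases p) auto
  have ch: "is_chain V2 W2 (Suc n) P" using Cons.prems by (simp add: is_chain_def)
  have ha: "homog W2 a" and len: "length xs = Suc n" and hx: "\<forall>x\<in>set xs. homog V2 x"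
    using Cons.prems p by (auto simp: is_chain_def)
  have "Psi_n V2 t psi (dcoch scm1 V1 br1 W1 act1 f) (p # P)
      = c * (sgn (sp V2 xs) * psi (dcoch scm1 V1 br1 W1 act1 f (rev (map t xs))) a) + Psi_n V2 t psi (dcoch scm1 V1 br1 W1 act1 f) P"
    using Psi_Cons[of V2 t psi _ p P] Psi_single p by (simp add: mult.assoc)
  also have "\<dots> = c * Psi_n V2 t psi f (bd_gen V2 br2 W2 act2 a xs) + Psi_n V2 t psi f (bd V2 br2 W2 act2 P)"
    using gen_main[OF f len hx ha] Cons.IH[OF ch] by simp
  also have "\<dots> = Psi_n V2 t psi f (bd V2 br2 W2 act2 (p # P))"
    unfolding Psi_bd p by simp
  finally show ?case .
qed

end

context PA begin

lemma act1_lin2: "Vector_Spaces.linear scm1 scm1 (act1 x)"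
  using LM1 unfolding lie_supermodule_def bilinear_map_def by blast
lemma act1_zero[simp]: "act1 x 0 = 0" using lin_zero[OF act1_lin2] .
lemma act1_in: "homog V1 x \<Longrightarrow> homog W1 a \<Longrightarrow> act1 x a \<in> W1 ((par V1 x + par W1 a) mod 2)"
proof -
  assume h: "homog V1 x" "homog W1 a"
  have "\<forall>p q x m. p < 2 \<longrightarrow> q < 2 \<longrightarrow> x \<in> V1 p \<longrightarrow> m \<in> W1 q \<longrightarrow> act1 x m \<in> W1 ((p + q) mod 2)"
    using LM1 unfolding lie_supermodule_def by blast
  from this[rule_format, OF par_lt par_lt homog_in[OF S1 h(1)] homog_in[OF SM1 h(2)]] show ?thesis .
qed

lemma PS0: "{(i, j). i < j \<and> j < Suc 0} = ({} :: (nat \<times> nat) set)" "{(i, j). i < j \<and> j = 0} = ({} :: (nat \<times> nat) set)" by auto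

definition HH where "HH \<longleftrightarrow> (\<forall>n f P. cochain sc1 V1 scm1 n f \<longrightarrow> is_chain V2 W2 (Suc n) P \<longrightarrow>
            Psi_n V2 t psi (dcoch scm1 V1 br1 W1 act1 f) P = Psi_n V2 t psi f (bd V2 br2 W2 act2 P))"

lemma fwd_P2_hom:
  assumes H: HH and hx: "homog V2 x" and ha: "homog W2 a" and hm: "homog W1 m"
  shows "psi m (act2 x a) = psi (act1 (t x) m) a"
proof -
  have c0: "cochain sc1 V1 scm1 0 (\<lambda>_. m)" by (simp add: cochain_def)
  have ch: "is_chain V2 W2 (Suc 0) [(1, a, [x])]" using hx ha by (simp add: is_chain_def)
  have E: "Psi_n V2 t psi (dcoch scm1 V1 br1 W1 act1 (\<lambda>_. m)) [(1, a, [x])] = Psi_n V2 t psi (\<lambda>_. m) (bd V2 br2 W2 act2 [(1, a, [x])])"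
    using H c0 ch unfolding HH_def by blast
  have L: "Psi_n V2 t psi (dcoch scm1 V1 br1 W1 act1 (\<lambda>_. m)) [(1, a, [x])]
     = sgn (par V2 x) * (sgn (par V1 (t x)) * psi (act1 (t x) (proj W1 0 m)) a
        + sgn (par V1 (t x) + (par V1 (t x) + 1)) * psi (act1 (t x) (proj W1 1 m)) a)"
    unfolding Psi_single dcoch_def psi_addL psi_dpart by (simp add: fcomp_def kk_def del_def sp_def PS0)
  have R: "Psi_n V2 t psi (\<lambda>_. m) (bd V2 br2 W2 act2 [(1, a, [x])]) = sgn (par W2 a * (par V2 x + 1)) * psi m (act2 x a)"
    unfolding Psi_bd Psi_bd_gen by (simp add: kk_def del_def sp_def PS0)
  have pt: "par V1 (t x) = par V2 x" using par_t[OF hx] .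
  have mr: "m \<in> W1 (par W1 m)" using homog_in[OF SM1 hm] .
  have ain: "act2 x a \<in> W2 ((par V2 x + par W2 a) mod 2)" using act2_in[OF hx ha] .
  have a1in: "act1 (t x) m \<in> W1 ((par V2 x + par W1 m) mod 2)" using act1_in[OF homog_t[OF hx] hm] pt by simp
  have aa: "a \<in> W2 (par W2 a)" using homog_in[OF SM2 ha] .
  have pj: "proj W1 q m = (if q mod 2 = par W1 m then m else 0)" for q using proj_in[OF SM1 par_lt mr] .
  have EE: "sgn (par V2 x) * (sgn (par V2 x) * psi (act1 (t x) (if 0 mod 2 = par W1 m then m else 0)) a
        + sgn (par V2 x + (par V2 x + 1)) * psi (act1 (t x) (if 1 mod 2 = par W1 m then m else 0)) a)
      = sgn (par W2 a * (par V2 x + 1)) * psi m (act2 x a)"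
    using E unfolding L R pt pj .
  have z1: "psi m (act2 x a) = 0" if "par W1 m \<noteq> (par V2 x + par W2 a) mod 2"
    using psi_even[OF par_lt _ that mr ain] by simp
  have z2: "psi (act1 (t x) m) a = 0" if "(par V2 x + par W1 m) mod 2 \<noteq> par W2 a"
    using psi_even[OF _ par_lt that a1in aa] by simp
  show ?thesis
    using par_cases[of V2 x] par_cases[of W2 a] par_cases[of W1 m] EE z1 z2
    by (elim disjE) simp_all
qed

lemma PS1: "{(i, j). i < j \<and> j < Suc 1} = {(0::nat, 1::nat)}" by auto

lemma fwd_anti_raw:
  assumes H: HH and P2a: "\<forall>x m1 m2. psi m1 (act2 x m2) = psi (act1 (t x) m1) m2"
    and hx: "homog V2 x" and hy: "homog V2 y" and hm: "homog W1 m" and ha: "homog W2 a"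
    and lin: "Vector_Spaces.linear sc1 (*) \<phi>"
  shows "sgn (par V2 x + par V2 y) *
     (sgn (0 + (0 + 1) * (par V2 y + 1) + (par V2 y + 1 + par V2 y + 1) * (par V2 x + 1))
        * psi (proj W1 (0 + (par V1 (br1 (t y) (t x)) + 1)) (scm1 (\<phi> (br1 (t y) (t x))) m)) a
    + sgn (1 + (0 + 1) * (par V2 y + 1) + (par V2 y + 1 + par V2 y + 1) * (par V2 x + 1))
        * psi (proj W1 (1 + (par V1 (br1 (t y) (t x)) + 1)) (scm1 (\<phi> (br1 (t y) (t x))) m)) a)
   = sgn (1 + par W2 a + (0 + 1) * (par V2 x + 1) + (par V2 x + 1 + par V2 x + 1) * (par V2 y + 1))
     * sgn (par V2 (br2 x y)) * psi (scm1 (\<phi> (t (br2 x y))) m) a"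
proof -
  interpret B0: PB0 sc1 V1 br1 sc2 V2 br2 scm1 W1 act1 scm2 W2 act2 t psi
    by (intro PB0.intro PB0_axioms.intro PA_axioms P2a)
  define f where "f = (\<lambda>zs. scm1 (\<phi> (hd zs)) m)"
  have vs1: "vector_space sc1" using ss_vs[OF S1] .
  have vsm: "vector_space scm1" using ss_vs[OF SM1] .
  have lf: "Vector_Spaces.linear sc1 scm1 (\<lambda>z. scm1 (\<phi> z) m)"
    unfolding Vector_Spaces.linear_iff using vs1 vsm lin_add[OF lin] lin_scale[OF lin]
    by (simp add: vector_space.vector_space_assms(2)[OF vsm] scm1_scale)
  have cf: "cochain sc1 V1 scm1 1 f"
    unfolding cochain_def
  proof (intro conjI allI impI)
    fix xs :: "'g1 list" and i :: nat assume l: "length xs = 1" and i: "i < 1"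
    then obtain z where "xs = [z]" by (metis One_nat_def length_0_conv length_Suc_conv)
    with i have "(\<lambda>y. f (xs[i := y])) = (\<lambda>z. scm1 (\<phi> z) m)" by (simp add: f_def)
    thus "Vector_Spaces.linear sc1 scm1 (\<lambda>y. f (xs[i := y]))" using lf by simp
  next
    fix xs :: "'g1 list" and i :: nat assume "length xs = 1" "Suc i < 1"
    thus "f (xs[i := xs ! Suc i, Suc i := xs ! i]) = scm1 (sgn ((par V1 (xs ! i) + 1) * (par V1 (xs ! Suc i) + 1))) (f xs)"
      by simp
  qed
  have hxs: "\<forall>z\<in>set [x, y]. homog V2 z" using hx hy by simp
  have ch: "is_chain V2 W2 (Suc 1) [(1, a, [x, y])]" using hx hy ha by (simp add: is_chain_def)
  have E: "Psi_n V2 t psi (dcoch scm1 V1 br1 W1 act1 f) [(1, a, [x, y])] = Psi_n V2 t psi f (bd V2 br2 W2 act2 [(1, a, [x, y])])"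
    using H cf ch unfolding HH_def by blast
  have len2: "length [x, y] = Suc 1" by simp
  note GS = B0.gen_split[OF cf len2 hxs ha refl refl refl refl refl]
  have E2: "sgn (sp V2 [x, y]) * psi (dcoch scm1 V1 br1 W1 act1 f (rev (map t [x, y]))) a
      = Psi_n V2 t psi f (bd_gen V2 br2 W2 act2 a [x, y])"
    using E unfolding Psi_single Psi_bd by simp
  have E3: "(\<Sum>q\<in>{(i, j). i < j \<and> j < Suc 1}. sgn (sp V2 [x, y]) *
        ((\<lambda>p. (\<lambda>(i,j). sgn (p + (kk V1 (rev (map t [x, y])) i + 1) * (par V1 ((rev (map t [x, y])) ! i) + 1) + (kk V1 (rev (map t [x, y])) j + par V1 ((rev (map t [x, y])) ! i) + 1) * (par V1 ((rev (map t [x, y])) ! j) + 1))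
        * psi (fcomp V1 W1 p f (br1 ((rev (map t [x, y])) ! i) ((rev (map t [x, y])) ! j) # del i (del j (rev (map t [x, y]))))) a)) 0 q
        + (\<lambda>p. (\<lambda>(i,j). sgn (p + (kk V1 (rev (map t [x, y])) i + 1) * (par V1 ((rev (map t [x, y])) ! i) + 1) + (kk V1 (rev (map t [x, y])) j + par V1 ((rev (map t [x, y])) ! i) + 1) * (par V1 ((rev (map t [x, y])) ! j) + 1))
        * psi (fcomp V1 W1 p f (br1 ((rev (map t [x, y])) ! i) ((rev (map t [x, y])) ! j) # del i (del j (rev (map t [x, y]))))) a)) 1 q))
      = sum (\<lambda>(k,l). sgn (1 + par W2 a + (kk V2 [x, y] k + 1) * (par V2 ([x, y] ! k) + 1) + (kk V2 [x, y] l + par V2 ([x, y] ! k) + 1) * (par V2 ([x, y] ! l) + 1))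
     * sgn (sp V2 (br2 ([x, y] ! k) ([x, y] ! l) # del k (del l [x, y])))
     * psi (f (rev (map t (br2 ([x, y] ! k) ([x, y] ! l) # del k (del l [x, y]))))) a) {(i, j). i < j \<and> j < Suc 1}"
    using E2 unfolding GS(1) GS(2) by (rule add_left_imp_eq)
  show ?thesis using E3 unfolding PS1 sum.insert[OF finite.emptyI] sum.empty
    by (simp add: kk_def del_def fcomp_def f_def par_t[OF hx] par_t[OF hy])
qed

lemma fwd_anti_hom:
  assumes H: HH and P2a: "\<forall>x m1 m2. psi m1 (act2 x m2) = psi (act1 (t x) m1) m2"
    and hx: "homog V2 x" and hy: "homog V2 y" and hm: "homog W1 m" and ha: "homog W2 a"
    and nz: "psi m a \<noteq> 0"
  shows "t (br2 x y) = br1 (t y) (t x)"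
proof -
  define U where "U = br1 (t y) (t x)"
  define b where "b = br2 x y"
  have mr: "m \<in> W1 (par W1 m)" using homog_in[OF SM1 hm] .
  have aa: "a \<in> W2 (par W2 a)" using homog_in[OF SM2 ha] .
  have pm: "par W1 m = par W2 a"
  proof (rule ccontr)
    assume "par W1 m \<noteq> par W2 a"
    hence "psi m a = 0" using psi_even[OF par_lt par_lt _ mr aa] by simp
    with nz show False by simp
  qed
  have pj: "psi (proj W1 q (scm1 c m)) a = (if q mod 2 = par W2 a then c * psi m a else 0)" for q c
  proof -
    have "scm1 c m \<in> W1 (par W1 m)" using ss_scale[OF SM1 par_lt mr] .
    from proj_in[OF SM1 par_lt[of W1 m] this] show ?thesis using pm by (simp add: psi_scaleL)
  qed
  have ty: "t y \<in> V1 (par V2 y)" using homog_in[OF S1 homog_t[OF hy]] par_t[OF hy] by simp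
  have tx: "t x \<in> V1 (par V2 x)" using homog_in[OF S1 homog_t[OF hx]] par_t[OF hx] by simp
  have Uin: "U \<in> V1 ((par V2 y + par V2 x) mod 2)" unfolding U_def using br1_in[OF par_lt par_lt ty tx] .
  have bin: "b \<in> V2 ((par V2 x + par V2 y) mod 2)" unfolding b_def
    using br2_in[OF par_lt par_lt homog_in[OF S2 hx] homog_in[OF S2 hy]] .
  have pxc: "par V2 x = 0 \<or> par V2 x = 1" and pyc: "par V2 y = 0 \<or> par V2 y = 1"
    and pac: "par W2 a = 0 \<or> par W2 a = 1" using par_cases by auto
  have K: "(U \<noteq> 0 \<longrightarrow> b \<noteq> 0 \<longrightarrow> \<phi> U = \<phi> (t b)) \<and> (U = 0 \<longrightarrow> \<phi> (t b) = 0) \<and> (b = 0 \<longrightarrow> \<phi> U = 0)"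
    if lin: "Vector_Spaces.linear sc1 (*) \<phi>" for \<phi>
  proof -
    note raw = fwd_anti_raw[OF H P2a hx hy hm ha lin, folded U_def b_def, unfolded pj psi_scaleL]
    have c1: "\<phi> U = \<phi> (t b)" if "U \<noteq> 0" "b \<noteq> 0"
    proof -
      have pU: "par V1 U = (par V2 y + par V2 x) mod 2" using par_of_in[OF S1 _ Uin that(1)] by simp
      have pb: "par V2 b = (par V2 x + par V2 y) mod 2" using par_of_in[OF S2 _ bin that(2)] by simp
      show ?thesis using raw pxc pyc pac nz unfolding pU pb by (elim disjE) simp_all
    qed
    have c2: "\<phi> (t b) = 0" if "U = 0"
    proof -
      have z: "\<phi> U = 0" "par V1 U = 0" using that lin_zero[OF lin] by (simp_all add: par_def)
      show ?thesis using raw pxc pyc pac nz par_cases[of V2 b] unfolding z by (elim disjE) simp_all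
    qed
    have c3: "\<phi> U = 0" if "b = 0"
    proof -
      have z: "\<phi> (t b) = 0" "par V2 b = 0" using that lin_zero[OF lin] by (simp_all add: par_def)
      show ?thesis using raw pxc pyc pac nz par_cases[of V1 U] unfolding z by (elim disjE) simp_all
    qed
    show ?thesis using c1 c2 c3 by blast
  qed
  have vs1: "vector_space sc1" using ss_vs[OF S1] .
  show ?thesis
  proof (rule ccontr)
    assume ne: "t (br2 x y) \<noteq> br1 (t y) (t x)"
    hence ne': "t b \<noteq> U" by (simp add: U_def b_def)
    consider "U = 0" | "b = 0" | "U \<noteq> 0" "b \<noteq> 0" by blast
    then show False
    proof cases
      case 1
      hence "t b \<noteq> 0" using ne' by simp
      then obtain \<phi> where "Vector_Spaces.linear sc1 (*) \<phi>" "\<phi> (t b) \<noteq> 0" using exists_functional[OF vs1] by blast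
      then show False using K 1 by blast
    next
      case 2
      hence "U \<noteq> 0" using ne' by simp
      then obtain \<phi> where "Vector_Spaces.linear sc1 (*) \<phi>" "\<phi> U \<noteq> 0" using exists_functional[OF vs1] by blast
      then show False using K 2 by blast
    next
      case 3
      have "U - t b \<noteq> 0" using ne' by simp
      then obtain \<phi> where l: "Vector_Spaces.linear sc1 (*) \<phi>" and n: "\<phi> (U - t b) \<noteq> 0"
        using exists_functional[OF vs1] by blast
      have "\<phi> U = \<phi> (t b)" using K[OF l] 3 by blast
      then show False using n lin_diff[OF l] by simp
    qed
  qed
qed

end

context PA begin

lemma act2_lin1: "Vector_Spaces.linear sc2 scm2 (\<lambda>x. act2 x m)"
  using LM2 unfolding lie_supermodule_def bilinear_map_def by blast
lemma act2_lin2: "Vector_Spaces.linear scm2 scm2 (act2 x)"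
  using LM2 unfolding lie_supermodule_def bilinear_map_def by blast
lemma act1_lin1: "Vector_Spaces.linear sc1 scm1 (\<lambda>x. act1 x m)"
  using LM1 unfolding lie_supermodule_def bilinear_map_def by blast
lemma br2_lin1: "Vector_Spaces.linear sc2 sc2 (\<lambda>x. br2 x y)"
  using LS2 unfolding lie_superalgebra_def bilinear_map_def by blast
lemma br2_lin2: "Vector_Spaces.linear sc2 sc2 (br2 x)"
  using LS2 unfolding lie_superalgebra_def bilinear_map_def by blast
lemma br1_lin1: "Vector_Spaces.linear sc1 sc1 (\<lambda>x. br1 x y)"
  using LS1 unfolding lie_superalgebra_def bilinear_map_def by blast
lemma br1_lin2: "Vector_Spaces.linear sc1 sc1 (br1 x)"
  using LS1 unfolding lie_superalgebra_def bilinear_map_def by blast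

lemma homog0: "v \<in> V 0 \<Longrightarrow> homog V v" and homog1: "v \<in> V 1 \<Longrightarrow> homog V v"
  by (simp_all add: homog_def)

lemma P2_ext:
  assumes h: "\<And>x a m. homog V2 x \<Longrightarrow> homog W2 a \<Longrightarrow> homog W1 m \<Longrightarrow> psi m (act2 x a) = psi (act1 (t x) m) a"
  shows "psi m (act2 x a) = psi (act1 (t x) m) a"
proof -
  have s1: "psi m (act2 x a) = psi (act1 (t x) m) a" if hx: "homog V2 x" and hm: "homog W1 m" for x m a
  proof -
    obtain a0 a1 where a: "a0 \<in> W2 0" "a1 \<in> W2 1" "a = a0 + a1" using ss_decomp[OF SM2] by blast
    show ?thesis using h[OF hx homog0[where V=W2, OF a(1)] hm] h[OF hx homog1[where V=W2, OF a(2)] hm] a(3)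
      by (simp add: lin_add[OF act2_lin2] psi_addR)
  qed
  have s2: "psi m (act2 x a) = psi (act1 (t x) m) a" if hx: "homog V2 x" for x m a
  proof -
    obtain m0 m1 where mm: "m0 \<in> W1 0" "m1 \<in> W1 1" "m = m0 + m1" using ss_decomp[OF SM1] by blast
    show ?thesis using s1[OF hx homog0[where V=W1, OF mm(1)]] s1[OF hx homog1[where V=W1, OF mm(2)]] mm(3)
      by (simp add: lin_add[OF act1_lin2] psi_addL)
  qed
  obtain x0 x1 where xx: "x0 \<in> V2 0" "x1 \<in> V2 1" "x = x0 + x1" using ss_decomp[OF S2] by blast
  show ?thesis using s2[OF homog0[where V=V2, OF xx(1)], of m a] s2[OF homog1[where V=V2, OF xx(2)], of m a] xx(3)
    by (simp add: lin_add[OF act2_lin1] lin_add[OF t_lin] lin_add[OF act1_lin1] psi_addL psi_addR)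
qed

lemma anti_ext:
  assumes h: "\<And>x y. homog V2 x \<Longrightarrow> homog V2 y \<Longrightarrow> t (br2 x y) = br1 (t y) (t x)"
  shows "t (br2 x y) = br1 (t y) (t x)"
proof -
  have s1: "t (br2 x y) = br1 (t y) (t x)" if hx: "homog V2 x" for x y
  proof -
    obtain y0 y1 where yy: "y0 \<in> V2 0" "y1 \<in> V2 1" "y = y0 + y1" using ss_decomp[OF S2] by blast
    show ?thesis using h[OF hx homog0[where V=V2, OF yy(1)]] h[OF hx homog1[where V=V2, OF yy(2)]] yy(3)
      by (simp add: lin_add[OF br2_lin2] lin_add[OF t_lin] lin_add[OF br1_lin1])
  qed
  obtain x0 x1 where xx: "x0 \<in> V2 0" "x1 \<in> V2 1" "x = x0 + x1" using ss_decomp[OF S2] by blast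
  show ?thesis using s1[OF homog0[where V=V2, OF xx(1)], of y] s1[OF homog1[where V=V2, OF xx(2)], of y] xx(3)
    by (simp add: lin_add[OF br2_lin1] lin_add[OF t_lin] lin_add[OF br1_lin2])
qed

lemma exists_hom_pair:
  assumes "\<exists>m::'m1. m \<noteq> 0"
  shows "\<exists>m a. homog W1 m \<and> homog W2 a \<and> psi m a \<noteq> 0"
proof -
  obtain m :: 'm1 where m: "m \<noteq> 0" using assms by blast
  obtain b where b: "psi m b \<noteq> 0" using psi_nd1 m by blast
  obtain m0 m1 where mm: "m0 \<in> W1 0" "m1 \<in> W1 1" "m = m0 + m1" using ss_decomp[OF SM1] by blast
  obtain b0 b1 where bb: "b0 \<in> W2 0" "b1 \<in> W2 1" "b = b0 + b1" using ss_decomp[OF SM2] by blast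
  have "psi m b = psi m0 b0 + psi m0 b1 + (psi m1 b0 + psi m1 b1)"
    using mm(3) bb(3) by (simp add: psi_addL psi_addR)
  hence "psi m0 b0 \<noteq> 0 \<or> psi m0 b1 \<noteq> 0 \<or> psi m1 b0 \<noteq> 0 \<or> psi m1 b1 \<noteq> 0" using b by auto
  thus ?thesis using homog0[where V=W1, OF mm(1)] homog1[where V=W1, OF mm(2)] homog0[where V=W2, OF bb(1)] homog1[where V=W2, OF bb(2)] by blast
qed

end

theorem propositionA5:
  fixes sc1 :: "complex \<Rightarrow> 'g1::ab_group_add \<Rightarrow> 'g1" and V1 :: "nat \<Rightarrow> 'g1 set" and br1 :: "'g1 \<Rightarrow> 'g1 \<Rightarrow> 'g1"
    and sc2 :: "complex \<Rightarrow> 'g2::ab_group_add \<Rightarrow> 'g2" and V2 :: "nat \<Rightarrow> 'g2 set" and br2 :: "'g2 \<Rightarrow> 'g2 \<Rightarrow> 'g2"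
    and scm1 :: "complex \<Rightarrow> 'm1::ab_group_add \<Rightarrow> 'm1" and W1 :: "nat \<Rightarrow> 'm1 set" and act1 :: "'g1 \<Rightarrow> 'm1 \<Rightarrow> 'm1"
    and scm2 :: "complex \<Rightarrow> 'm2::ab_group_add \<Rightarrow> 'm2" and W2 :: "nat \<Rightarrow> 'm2 set" and act2 :: "'g2 \<Rightarrow> 'm2 \<Rightarrow> 'm2"
    and t :: "'g2 \<Rightarrow> 'g1" and psi :: "'m1 \<Rightarrow> 'm2 \<Rightarrow> complex"
  assumes "lie_superalgebra sc1 V1 br1" and "lie_superalgebra sc2 V2 br2"
    and "lie_supermodule sc1 V1 br1 scm1 W1 act1" and "lie_supermodule sc2 V2 br2 scm2 W2 act2"
    and "even_linear_iso sc2 V2 sc1 V1 t"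
    and "nondeg_even_pairing scm1 W1 scm2 W2 psi"
    and "\<exists>m::'m1. m \<noteq> 0"
  shows "(\<forall>n f P. cochain sc1 V1 scm1 n f \<longrightarrow> is_chain V2 W2 (Suc n) P \<longrightarrow>
            Psi_n V2 t psi (dcoch scm1 V1 br1 W1 act1 f) P = Psi_n V2 t psi f (bd V2 br2 W2 act2 P))
     \<longleftrightarrow> (lie_anti_iso sc2 br2 sc1 br1 t
          \<and> (\<forall>x m1 m2. psi m1 (act2 x m2) = psi (act1 (t x) m1) m2))"
proof -
  interpret PA sc1 V1 br1 sc2 V2 br2 scm1 W1 act1 scm2 W2 act2 t psi
    using assms(1-6) by (rule PA.intro)
  show ?thesis
  proof
    assume L: "\<forall>n f P. cochain sc1 V1 scm1 n f \<longrightarrow> is_chain V2 W2 (Suc n) P \<longrightarrow>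
            Psi_n V2 t psi (dcoch scm1 V1 br1 W1 act1 f) P = Psi_n V2 t psi f (bd V2 br2 W2 act2 P)"
    hence H: HH unfolding HH_def .
    have P2a: "\<forall>x m1 m2. psi m1 (act2 x m2) = psi (act1 (t x) m1) m2"
      using P2_ext[OF fwd_P2_hom[OF H]] by blast
    obtain m a where ma: "homog W1 m" "homog W2 a" "psi m a \<noteq> 0" using exists_hom_pair[OF assms(7)] by blast
    have an: "\<forall>x y. t (br2 x y) = br1 (t y) (t x)"
      using anti_ext[OF fwd_anti_hom[OF H P2a _ _ ma]] by blast
    show "lie_anti_iso sc2 br2 sc1 br1 t \<and> (\<forall>x m1 m2. psi m1 (act2 x m2) = psi (act1 (t x) m1) m2)"
      unfolding lie_anti_iso_def using t_lin t_bij an P2a by blast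
  next
    assume R: "lie_anti_iso sc2 br2 sc1 br1 t \<and> (\<forall>x m1 m2. psi m1 (act2 x m2) = psi (act1 (t x) m1) m2)"
    have an: "\<forall>x y. t (br2 x y) = br1 (t y) (t x)" using R unfolding lie_anti_iso_def by blast
    interpret PB sc1 V1 br1 sc2 V2 br2 scm1 W1 act1 scm2 W2 act2 t psi
      by (intro PB.intro PB0.intro PB_axioms.intro PB0_axioms.intro PA_axioms an) (use R in blast)
    show "\<forall>n f P. cochain sc1 V1 scm1 n f \<longrightarrow> is_chain V2 W2 (Suc n) P \<longrightarrow>
            Psi_n V2 t psi (dcoch scm1 V1 br1 W1 act1 f) P = Psi_n V2 t psi f (bd V2 br2 W2 act2 P)"
      using back_dir by blast
  qed
qed


end
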